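(* Let $M$ be a non-trivial finitely generated indecomposable $\langle t\rangle$-module. Then its graph $\Gamma_M$ is of type 1, type 2, or type 3.
   Context: $\langle t\rangle=\{0,1,t,t^2,\dots\}$ is the free commutative monoid with zero on one generator. A $\langle t\rangle$-module is a pointed set $(M,* )$ with an action of $\langle t\rangle$ such that $1m=m$, $a(bm)=(ab)m$, $0m=*$; it is finitely generated if there are $m_1,\dots,m_k$ with every element of the form $t^jm_i$ or $*$; it is non-trivial if $M\ne\{*\}$; it is indecomposable if it is not isomorphic to a wedge sum $M'\oplus M''$ (disjoint union with basepoints identified) of two non-trivial modules. The graph $\Gamma_M$ is the directed graph with vertex set $M\setminus\{*\}$ and an edge $m\to tm$ for every $m\in M\setminus\{*\}$ with $tm\ne *$; each vertex has at most one outgoing edge. A leaf is a vertex with no incoming edge, a root a vertex with no outgoing edge. $\Gamma_M$ is of type 1 if it is a rooted tree: its underlying undirected graph is a tree with a unique root, and from every vertex there is a unique directed path to the root. It is of type 2 if it is obtained from a (finite) rooted tree by joining its root by an edge to the initial vertex of the infinite directed ray $v_0\to v_1\to v_2\to\cdots$ (the graph $\Gamma_{\langle t\rangle}$). It is of type 3 if it is obtained from an oriented directed cycle by attaching rooted trees to vertices of the cycle (each tree's root having an outgoing edge into the cycle). *)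

theory Defs
  imports Main
begin

text \<open>Elements of the monoid <t> = {0,1,t,t^2,...}: None is 0, Some j is t^j.\<close>
type_synonym tmon = "nat option"

fun tmul :: "tmon \<Rightarrow> tmon \<Rightarrow> tmon" where
  "tmul (Some i) (Some j) = Some (i + j)"
| "tmul _ _ = None"

definition tmodule :: "'a set \<Rightarrow> 'a \<Rightarrow> (tmon \<Rightarrow> 'a \<Rightarrow> 'a) \<Rightarrow> bool" where
  "tmodule M base act \<longleftrightarrow>
     base \<in> M \<and>
     (\<forall>a. \<forall>m\<in>M. act a m \<in> M) \<and>
     (\<forall>m\<in>M. act (Some 0) m = m) \<and>
     (\<forall>a b. \<forall>m\<in>M. act a (act b m) = act (tmul a b) m) \<and>
     (\<forall>m\<in>M. act None m = base)"

definition fin_gen :: "'a set \<Rightarrow> 'a \<Rightarrow> (tmon \<Rightarrow> 'a \<Rightarrow> 'a) \<Rightarrow> bool" where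
  "fin_gen M base act \<longleftrightarrow>
     (\<exists>gs :: 'a list. set gs \<subseteq> M \<and>
        (\<forall>m\<in>M. m = base \<or> (\<exists>g\<in>set gs. \<exists>j. m = act (Some j) g)))"

definition nontrivial :: "'a set \<Rightarrow> 'a \<Rightarrow> bool" where
  "nontrivial M base \<longleftrightarrow> M \<noteq> {base}"

definition submodule :: "'a set \<Rightarrow> 'a set \<Rightarrow> 'a \<Rightarrow> (tmon \<Rightarrow> 'a \<Rightarrow> 'a) \<Rightarrow> bool" where
  "submodule N M base act \<longleftrightarrow> N \<subseteq> M \<and> base \<in> N \<and> (\<forall>a. \<forall>m\<in>N. act a m \<in> N)"

text \<open>M is (internally) the wedge sum of two non-trivial submodules.\<close>
definition decomposable :: "'a set \<Rightarrow> 'a \<Rightarrow> (tmon \<Rightarrow> 'a \<Rightarrow> 'a) \<Rightarrow> bool" where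
  "decomposable M base act \<longleftrightarrow>
     (\<exists>N1 N2. submodule N1 M base act \<and> submodule N2 M base act \<and>
        N1 \<union> N2 = M \<and> N1 \<inter> N2 = {base} \<and>
        nontrivial N1 base \<and> nontrivial N2 base)"

definition indecomposable :: "'a set \<Rightarrow> 'a \<Rightarrow> (tmon \<Rightarrow> 'a \<Rightarrow> 'a) \<Rightarrow> bool" where
  "indecomposable M base act \<longleftrightarrow> \<not> decomposable M base act"

text \<open>Undirected cycle in the underlying (multi)graph: distinct vertices v_0..v_(k-1), k \<ge> 1,
  and distinct edges e_i joining v_i and v_(i+1 mod k) (loops and 2-cycles included).\<close>
definition und_cycle :: "'a set \<Rightarrow> ('a \<times> 'a) set \<Rightarrow> 'a list \<Rightarrow> ('a \<times> 'a) list \<Rightarrow> bool" where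
  "und_cycle V E vs es \<longleftrightarrow>
     length vs \<ge> 1 \<and> length es = length vs \<and> distinct vs \<and> distinct es \<and> set vs \<subseteq> V \<and>
     (\<forall>i<length vs. es ! i \<in> E \<and>
        (es ! i = (vs ! i, vs ! ((i + 1) mod length vs)) \<or>
         es ! i = (vs ! ((i + 1) mod length vs), vs ! i)))"

definition und_connected :: "'a set \<Rightarrow> ('a \<times> 'a) set \<Rightarrow> bool" where
  "und_connected V E \<longleftrightarrow>
     (\<forall>u\<in>V. \<forall>v\<in>V. (\<lambda>x y. (x, y) \<in> E \<or> (y, x) \<in> E)\<^sup>*\<^sup>* u v)"

definition is_und_tree :: "'a set \<Rightarrow> ('a \<times> 'a) set \<Rightarrow> bool" where
  "is_und_tree V E \<longleftrightarrow> V \<noteq> {} \<and> und_connected V E \<and> \<not> (\<exists>vs es. und_cycle V E vs es)"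

definition is_root :: "'a set \<Rightarrow> ('a \<times> 'a) set \<Rightarrow> 'a \<Rightarrow> bool" where
  "is_root V E r \<longleftrightarrow> r \<in> V \<and> \<not> (\<exists>w. (r, w) \<in> E)"

definition dpath :: "'a set \<Rightarrow> ('a \<times> 'a) set \<Rightarrow> 'a list \<Rightarrow> 'a \<Rightarrow> 'a \<Rightarrow> bool" where
  "dpath V E p u v \<longleftrightarrow> p \<noteq> [] \<and> hd p = u \<and> last p = v \<and> distinct p \<and> set p \<subseteq> V \<and>
     (\<forall>i. Suc i < length p \<longrightarrow> (p ! i, p ! Suc i) \<in> E)"

definition rooted_tree :: "'a set \<Rightarrow> ('a \<times> 'a) set \<Rightarrow> 'a \<Rightarrow> bool" where
  "rooted_tree V E r \<longleftrightarrow>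
     E \<subseteq> V \<times> V \<and> is_und_tree V E \<and> is_root V E r \<and> (\<forall>r'. is_root V E r' \<longrightarrow> r' = r) \<and>
     (\<forall>v\<in>V. \<exists>!p. dpath V E p v r)"

definition induced :: "('a \<times> 'a) set \<Rightarrow> 'a set \<Rightarrow> ('a \<times> 'a) set" where
  "induced E S = E \<inter> (S \<times> S)"

definition gverts :: "'a set \<Rightarrow> 'a \<Rightarrow> 'a set" where
  "gverts M base = M - {base}"

definition gedges :: "'a set \<Rightarrow> 'a \<Rightarrow> (tmon \<Rightarrow> 'a \<Rightarrow> 'a) \<Rightarrow> ('a \<times> 'a) set" where
  "gedges M base act = {(m, act (Some 1) m) | m. m \<in> M - {base} \<and> act (Some 1) m \<noteq> base}"

definition graph_type1 :: "'a set \<Rightarrow> ('a \<times> 'a) set \<Rightarrow> bool" where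
  "graph_type1 V E \<longleftrightarrow> (\<exists>r. rooted_tree V E r)"

definition graph_type2 :: "'a set \<Rightarrow> ('a \<times> 'a) set \<Rightarrow> bool" where
  "graph_type2 V E \<longleftrightarrow>
     (\<exists>T rho (v :: nat \<Rightarrow> 'a).
        finite T \<and> rooted_tree T (induced E T) rho \<and>
        inj v \<and> T \<inter> range v = {} \<and> V = T \<union> range v \<and>
        E = induced E T \<union> {(rho, v 0)} \<union> range (\<lambda>n. (v n, v (Suc n))))"

definition graph_type3 :: "'a set \<Rightarrow> ('a \<times> 'a) set \<Rightarrow> bool" where
  "graph_type3 V E \<longleftrightarrow>
     (\<exists>cs Ts rt att.
        cs \<noteq> [] \<and> distinct cs \<and> set cs \<subseteq> V \<and>
        induced E (set cs) = {(cs ! i, cs ! ((i + 1) mod length cs)) | i. i < length cs} \<and>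
        (\<forall>T\<in>Ts. T \<noteq> {}) \<and>
        (\<forall>T1\<in>Ts. \<forall>T2\<in>Ts. T1 \<noteq> T2 \<longrightarrow> T1 \<inter> T2 = {}) \<and>
        \<Union>Ts = V - set cs \<and>
        (\<forall>T\<in>Ts. rooted_tree T (induced E T) (rt T) \<and> att T \<in> set cs) \<and>
        E = induced E (set cs) \<union> (\<Union>T\<in>Ts. induced E T \<union> {(rt T, att T)}))"

end

theory Submission
  imports Defs
begin


lemma tree_lemma:
  fixes f :: "'a \<Rightarrow> 'a"
  assumes Ef: "\<And>x y. (x,y) \<in> E \<Longrightarrow> y = f x"
    and rT: "r \<in> T"
    and step: "\<And>x. x \<in> T \<Longrightarrow> x \<noteq> r \<Longrightarrow> (x, f x) \<in> E \<and> f x \<in> T"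
    and rnot: "f r \<notin> T"
    and reach: "\<And>x. x \<in> T \<Longrightarrow> \<exists>n. (f^^n) x = r"
  shows "rooted_tree T (induced E T) r"
proof -
  define ET where "ET = induced E T"
  define d where "d x = (LEAST n. (f^^n) x = r)" for x
  have d_ok: "(f^^(d x)) x = r" if "x \<in> T" for x
    using reach[OF that] unfolding d_def by (rule LeastI_ex)
  have d_min: "d x \<le> n" if "(f^^n) x = r" for x n
    unfolding d_def using that by (rule Least_le)
  have ET_D: "a \<in> T \<and> b \<in> T \<and> b = f a \<and> a \<noteq> r" if "(a,b) \<in> ET" for a b
    using that rnot Ef unfolding ET_def induced_def by auto
  have ET_I: "(x, f x) \<in> ET" if "x \<in> T" "x \<noteq> r" for x
    using step[OF that] that unfolding ET_def induced_def by auto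
  have d0: "d x = 0 \<longleftrightarrow> x = r" if "x \<in> T" for x
    using d_ok[OF that] d_min[of 0 x] by auto
  have dstep: "d (f x) = d x - 1 \<and> d x \<ge> 1" if "x \<in> T" "x \<noteq> r" for x
  proof -
    have fx: "f x \<in> T" using step[OF that] by auto
    have dx: "d x \<ge> 1" using d0[OF that(1)] that(2) by auto
    have "(f^^(Suc (d x - 1))) x = r" using d_ok[OF that(1)] dx by simp
    hence "(f^^(d x - 1)) (f x) = r" by (simp only: funpow_Suc_right o_apply)
    hence a: "d (f x) \<le> d x - 1" by (rule d_min)
    have "(f^^(Suc (d (f x)))) x = r" using d_ok[OF fx] by (simp only: funpow_Suc_right o_apply)
    hence "d x \<le> Suc (d (f x))" by (rule d_min)
    with a dx show ?thesis by auto
  qed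
  have orb: "(f^^i) x \<in> T" if "x \<in> T" "i \<le> d x" for x i
    using that(2)
  proof (induction i)
    case 0 show ?case using that(1) by simp
  next
    case (Suc i)
    hence a: "(f^^i) x \<in> T" by simp
    have "(f^^i) x \<noteq> r" using d_min[of i x] Suc.prems by auto
    with step[OF a] show ?case by simp
  qed
  define p where "p x = map (\<lambda>i. (f^^i) x) [0..<Suc (d x)]" for x
  have p_path: "dpath T ET (p x) x r" if "x \<in> T" for x
  proof -
    have dist: "distinct (p x)"
      unfolding p_def distinct_map
    proof
      show "inj_on (\<lambda>i. (f ^^ i) x) (set [0..<Suc (d x)])"
      proof (rule inj_onI, rule ccontr)
        fix i j assume ij: "i \<in> set [0..<Suc (d x)]" "j \<in> set [0..<Suc (d x)]"
          "(f ^^ i) x = (f ^^ j) x" "i \<noteq> j"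
        have gen: False if "i' < j'" "j' \<le> d x" "(f ^^ i') x = (f ^^ j') x" for i' j'
        proof -
          have "(f^^(d x - j' + i')) x = (f^^(d x - j')) ((f^^i') x)" by (simp add: funpow_add)
          also have "\<dots> = (f^^(d x - j')) ((f^^j') x)" using that by simp
          also have "\<dots> = (f^^(d x - j' + j')) x" by (simp add: funpow_add)
          also have "\<dots> = r" using that d_ok[OF \<open>x \<in> T\<close>] by simp
          finally have "d x \<le> d x - j' + i'" by (rule d_min)
          with that show False by linarith
        qed
        show False
        proof (cases "i < j")
          case True then show False using gen[of i j] ij by auto
        next
          case False then show False using gen[of j i] ij by auto
        qed
      qed
    qed simp
    have edges: "(p x ! i, p x ! Suc i) \<in> ET" if "Suc i < length (p x)" for i
    proof -
      have i: "i < d x" using that unfolding p_def by simp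
      have a: "(f^^i) x \<in> T" using orb[OF \<open>x \<in> T\<close>] i by simp
      have b: "(f^^i) x \<noteq> r" using d_min[of i x] i by auto
      have "((f^^i) x, f ((f^^i) x)) \<in> ET" by (rule ET_I[OF a b])
      thus ?thesis using that unfolding p_def
        by (simp del: upt_Suc add: nth_map_upt)
    qed
    have "p x \<noteq> []" "hd (p x) = x" "last (p x) = r" "set (p x) \<subseteq> T"
      using orb[OF that] d_ok[OF that] unfolding p_def
      by (auto simp del: upt_Suc simp: hd_map last_map)
    then show ?thesis unfolding dpath_def
      using dist edges by auto
  qed
  have p_uniq: "q = p x" if "x \<in> T" "dpath T ET q x r" for x q
  proof -
    from that(2) have q: "q \<noteq> []" "hd q = x" "last q = r" "distinct q"
      "\<And>i. Suc i < length q \<Longrightarrow> (q ! i, q ! Suc i) \<in> ET"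
      unfolding dpath_def by auto
    have qi: "q ! i = (f^^i) x" if "i < length q" for i
      using that
    proof (induction i)
      case 0 then show ?case using q by (simp add: hd_conv_nth)
    next
      case (Suc i)
      hence "q ! Suc i = f (q ! i)" using ET_D[OF q(5)] by auto
      with Suc show ?case by simp
    qed
    define L where "L = length q"
    have L1: "L \<ge> 1" using q(1) unfolding L_def by (cases q) auto
    have "q ! (L - 1) = r" using q(1,3) unfolding L_def by (simp add: last_conv_nth)
    hence fr: "(f^^(L-1)) x = r" using qi[of "L-1"] L1 unfolding L_def by simp
    hence dle: "d x \<le> L - 1" by (rule d_min)
    have "d x = L - 1"
    proof (rule ccontr)
      assume "d x \<noteq> L - 1"
      hence lt: "d x < L - 1" using dle by simp
      have "q ! (d x) = q ! (L - 1)" using qi[of "d x"] qi[of "L - 1"] lt L1 d_ok[OF that(1)] fr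
        unfolding L_def by simp
      hence "d x = L - 1" using q(4) lt L1 unfolding L_def by (simp add: nth_eq_iff_index_eq)
      with lt show False by simp
    qed
    hence len: "length q = Suc (d x)" using L1 unfolding L_def by simp
    show ?thesis
      by (rule nth_equalityI) (simp_all add: len p_def qi del: upt_Suc)
  qed
  define R where "R a b \<longleftrightarrow> (a, b) \<in> ET \<or> (b, a) \<in> ET" for a b
  have Rsym: "R\<^sup>*\<^sup>* b a" if "R\<^sup>*\<^sup>* a b" for a b
    using that
  proof (induction rule: rtranclp_induct)
    case base then show ?case by simp
  next
    case (step y z)
    have "R z y" using step(2) unfolding R_def by auto
    then show ?case using step(3) by (rule converse_rtranclp_into_rtranclp)
  qed
  have toR: "R\<^sup>*\<^sup>* x ((f^^i) x)" if "x \<in> T" "i \<le> d x" for x i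
    using that(2)
  proof (induction i)
    case 0 then show ?case by simp
  next
    case (Suc i)
    have a: "(f^^i) x \<in> T" using orb[OF that(1)] Suc.prems by simp
    have b: "(f^^i) x \<noteq> r" using d_min[of i x] Suc.prems by auto
    have "R ((f^^i) x) ((f^^(Suc i)) x)" using ET_I[OF a b] unfolding R_def by simp
    with Suc show ?case by (meson Suc_leD rtranclp.rtrancl_into_rtrancl)
  qed
  have conn: "und_connected T ET"
    unfolding und_connected_def
  proof (intro ballI)
    fix u v assume uv: "u \<in> T" "v \<in> T"
    have "R\<^sup>*\<^sup>* u r" using toR[OF uv(1), of "d u"] d_ok[OF uv(1)] by simp
    moreover have "R\<^sup>*\<^sup>* r v" using Rsym toR[OF uv(2), of "d v"] d_ok[OF uv(2)] by simp
    ultimately have "R\<^sup>*\<^sup>* u v" by (rule rtranclp_trans)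
    thus "(\<lambda>x y. (x, y) \<in> ET \<or> (y, x) \<in> ET)\<^sup>*\<^sup>* u v" unfolding R_def[abs_def] .
  qed
  have nocyc: False if cyc: "und_cycle T ET vs es" for vs es
  proof -
    define k where "k = length vs"
    from cyc have k1: "k \<ge> 1" and lk: "length es = k" and dvs: "distinct vs" and des: "distinct es"
      and sv: "set vs \<subseteq> T"
      and ed: "\<And>i. i < k \<Longrightarrow> es ! i \<in> ET \<and>
        (es ! i = (vs ! i, vs ! ((i + 1) mod k)) \<or> es ! i = (vs ! ((i + 1) mod k), vs ! i))"
      unfolding und_cycle_def k_def by auto
    have vsT: "vs ! j \<in> T" if "j < k" for j using sv that unfolding k_def by auto
    define m where "m = Max ((\<lambda>j. d (vs ! j)) ` {..<k})"
    have "m \<in> (\<lambda>j. d (vs ! j)) ` {..<k}" unfolding m_def using k1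
      by (intro Max_in) (auto simp: lessThan_empty_iff)
    then obtain i where i: "i < k" "d (vs ! i) = m" by auto
    have mx: "d (vs ! j) \<le> d (vs ! i)" if "j < k" for j
    proof -
      have "d (vs ! j) \<le> m" unfolding m_def using that by (intro Max_ge) auto
      with i(2) show ?thesis by simp
    qed
    have noin: False if "j < k" "(vs ! j, vs ! i) \<in> ET" for j
    proof -
      from ET_D[OF that(2)] have "vs ! i = f (vs ! j)" "vs ! j \<in> T" "vs ! j \<noteq> r" by auto
      with dstep[of "vs ! j"] mx[OF that(1)] show False by auto
    qed
    have mod1: "(i + 1) mod k < k" using k1 by simp
    have ei: "es ! i = (vs ! i, vs ! ((i + 1) mod k))"
      using ed[OF i(1)] noin[OF mod1] by auto
    show False
    proof (cases "k = 1")
      case True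
      then have "es ! i = (vs ! i, vs ! i)" using ei i by simp
      then show False using noin[OF i(1)] ed[OF i(1)] by auto
    next
      case False
      hence k2: "k \<ge> 2" using k1 by simp
      define j where "j = (if i = 0 then k - 1 else i - 1)"
      have j: "j < k" "j \<noteq> i" "(j + 1) mod k = i" using i k2 unfolding j_def by auto
      have ej: "es ! j = (vs ! i, vs ! j)"
        using ed[OF j(1)] noin[OF j(1)] j(3) by auto
      have "vs ! ((i + 1) mod k) = f (vs ! i)" using ed[OF i(1)] ei ET_D by auto
      moreover have "vs ! j = f (vs ! i)" using ed[OF j(1)] ej ET_D by auto
      ultimately have "es ! i = es ! j" using ei ej by simp
      with des j i lk show False by (simp add: nth_eq_iff_index_eq)
    qed
  qed
  have ur: "r' = r" if "is_root T ET r'" for r'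
    using that ET_I unfolding is_root_def by blast
  show ?thesis
    unfolding rooted_tree_def ET_def[symmetric]
  proof (intro conjI allI impI ballI)
    show "ET \<subseteq> T \<times> T" unfolding ET_def induced_def by auto
    show "is_und_tree T ET" unfolding is_und_tree_def using rT conn nocyc by blast
    show "is_root T ET r" unfolding is_root_def using rT ET_D by blast
  qed (use ur p_path p_uniq in blast)+
qed




lemma funpow_base: "f b = b \<Longrightarrow> (f^^n) b = b"
  by (induction n) auto

locale gset =
  fixes M :: "'a set" and base :: 'a and f :: "'a \<Rightarrow> 'a" and G :: "'a set"
  assumes baseM: "base \<in> M" and fM: "\<And>m. m \<in> M \<Longrightarrow> f m \<in> M" and fb: "f base = base"
    and conn: "\<And>x y. x \<in> M - {base} \<Longrightarrow> y \<in> M - {base} \<Longrightarrow>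
        \<exists>i j. (f^^i) x = (f^^j) y \<and> (f^^i) x \<noteq> base"
    and Gfin: "finite G" and GV: "G \<subseteq> M - {base}"
    and gen: "\<And>m. m \<in> M - {base} \<Longrightarrow> \<exists>g\<in>G. \<exists>j. m = (f^^j) g"
begin

definition E where "E = {(m, f m) | m. m \<in> M - {base} \<and> f m \<noteq> base}"

lemma Ef: "(x,y) \<in> E \<Longrightarrow> y = f x" unfolding E_def by auto
lemma EI: "x \<in> M - {base} \<Longrightarrow> f x \<noteq> base \<Longrightarrow> (x, f x) \<in> E" unfolding E_def by auto
lemma ED: "(x,y) \<in> E \<Longrightarrow> x \<in> M - {base} \<and> y \<in> M - {base} \<and> y = f x"
  unfolding E_def using fM by auto

lemma fpowM: "m \<in> M \<Longrightarrow> (f^^n) m \<in> M"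
  by (induction n) (auto intro: fM)

lemma case1:
  assumes r: "r \<in> M - {base}" "f r = base"
  shows "graph_type1 (M - {base}) E"
proof -
  have reach: "(f^^i) x = r" if "x \<in> M - {base}" "(f^^i) x = (f^^j) r" "(f^^i) x \<noteq> base" for x i j
  proof (cases j)
    case 0 then show ?thesis using that by simp
  next
    case (Suc j')
    have "(f^^j) r = (f^^j') (f r)" using Suc by (simp only: funpow_Suc_right o_apply)
    also have "\<dots> = base" using r funpow_base[of f base] fb by simp
    finally show ?thesis using that by simp
  qed
  have reach': "\<exists>n. (f^^n) x = r" if "x \<in> M - {base}" for x
    using conn[OF that r(1)] reach[OF that] by blast
  have "rooted_tree (M - {base}) (induced E (M - {base})) r"
  proof (rule tree_lemma[where f=f])
    show "\<And>x y. (x, y) \<in> E \<Longrightarrow> y = f x" by (rule Ef)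
    show "r \<in> M - {base}" by (rule r)
    show "f r \<notin> M - {base}" using r by simp
    show "\<exists>n. (f ^^ n) x = r" if "x \<in> M - {base}" for x using reach' that .
    fix x assume x: "x \<in> M - {base}" "x \<noteq> r"
    obtain n where n: "(f^^n) x = r" using reach'[OF x(1)] by blast
    then obtain n' where n': "n = Suc n'" using x by (cases n) auto
    have "f x \<noteq> base"
    proof
      assume "f x = base"
      hence "(f^^n) x = base" using n' funpow_base[of f base] fb
        by (simp only: funpow_Suc_right o_apply)
      with n r show False by simp
    qed
    thus "(x, f x) \<in> E \<and> f x \<in> M - {base}" using x EI fM by auto
  qed
  moreover have "induced E (M - {base}) = E" unfolding induced_def using ED by auto
  ultimately show ?thesis unfolding graph_type1_def by auto
qed

end




context gset begin

lemma case2: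
  assumes noroot: "\<And>x. x \<in> M - {base} \<Longrightarrow> f x \<noteq> base"
    and x0: "x0 \<in> M - {base}" and pp: "p > 0" "(f^^p) x0 = x0"
  shows "graph_type3 (M - {base}) E"
proof -
  define V where "V = M - {base}"
  have fV: "f x \<in> V" if "x \<in> V" for x using that noroot fM unfolding V_def by auto
  have fpV: "(f^^n) x \<in> V" if "x \<in> V" for x n
    using that by (induction n) (auto intro: fV)
  have x0V: "x0 \<in> V" using x0 V_def by simp
  define p0 where "p0 = (LEAST p. p > 0 \<and> (f^^p) x0 = x0)"
  have p0: "p0 > 0" "(f^^p0) x0 = x0" unfolding p0_def using LeastI_ex[of "\<lambda>p. p > 0 \<and> (f^^p) x0 = x0"] pp by auto
  have p0min: "p0 \<le> q" if "q > 0" "(f^^q) x0 = x0" for q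
    unfolding p0_def using that by (intro Least_le) auto
  have per: "(f^^(q*p0 + s)) x0 = (f^^s) x0" for q s
  proof (induction q)
    case 0 then show ?case by simp
  next
    case (Suc q)
    have eq: "Suc q * p0 + s = (q*p0+s) + p0" by simp
    have "(f^^(Suc q * p0 + s)) x0 = (f^^(q*p0 + s)) ((f^^p0) x0)"
      unfolding eq funpow_add by simp
    with Suc p0 show ?case by simp
  qed
  have permod: "(f^^n) x0 = (f^^(n mod p0)) x0" for n
    using per[of "n div p0" "n mod p0"] by simp
  define cs where "cs = map (\<lambda>i. (f^^i) x0) [0..<p0]"
  define C where "C = set cs"
  have Ceq: "C = range (\<lambda>n. (f^^n) x0)"
  proof -
    have "(f^^n) x0 \<in> (\<lambda>x. (f ^^ x) x0) ` {0..<p0}" for n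
      using permod[of n] p0(1) by (intro image_eqI[of _ _ "n mod p0"]) auto
    thus ?thesis unfolding C_def cs_def by auto
  qed
  have lcs: "length cs = p0" unfolding cs_def by simp
  have csn: "cs ! i = (f^^i) x0" if "i < p0" for i unfolding cs_def using that by simp
  have dcs: "distinct cs"
    unfolding cs_def distinct_map
  proof
    show "inj_on (\<lambda>i. (f ^^ i) x0) (set [0..<p0])"
    proof (rule inj_onI, rule ccontr)
      fix i j assume ij: "i \<in> set [0..<p0]" "j \<in> set [0..<p0]" "(f ^^ i) x0 = (f ^^ j) x0" "i \<noteq> j"
      have gen: False if "i' < j'" "j' < p0" "(f ^^ i') x0 = (f ^^ j') x0" for i' j'
      proof -
        have "(f^^(p0 - j' + i')) x0 = (f^^(p0 - j')) ((f^^i') x0)" by (simp add: funpow_add)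
        also have "\<dots> = (f^^(p0 - j')) ((f^^j') x0)" using that by simp
        also have "\<dots> = (f^^(p0 - j' + j')) x0" by (simp add: funpow_add)
        also have "\<dots> = x0" using that p0 by simp
        finally have "p0 \<le> p0 - j' + i'" using that by (intro p0min) auto
        with that show False by linarith
      qed
      show False
      proof (cases "i < j")
        case True then show False using gen[of i j] ij by auto
      next
        case False then show False using gen[of j i] ij by auto
      qed
    qed
  qed simp
  have CV: "C \<subseteq> V" unfolding Ceq using fpV x0V by auto
  have fC: "f c \<in> C" if cC: "c \<in> C" for c
  proof -
    obtain n where "c = (f^^n) x0" using cC unfolding Ceq by blast
    hence "f c = (f^^(Suc n)) x0" by simp
    thus ?thesis unfolding Ceq by (metis rangeI)
  qed
  have EV: "(x, f x) \<in> E" if "x \<in> V" for x using EI noroot that unfolding V_def by auto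
  have indC: "induced E C = {(cs ! i, cs ! ((i + 1) mod length cs)) | i. i < length cs}"
  proof
    show "induced E C \<subseteq> {(cs ! i, cs ! ((i + 1) mod length cs)) | i. i < length cs}"
    proof
      fix e assume "e \<in> induced E C"
      then obtain a b where e: "e = (a,b)" "(a,b) \<in> E" "a \<in> C" by (auto simp: induced_def)
      then obtain i where i: "i < p0" "a = (f^^i) x0" unfolding C_def cs_def by auto
      have "b = (f^^(Suc i)) x0" using Ef[OF e(2)] i by simp
      also have "\<dots> = (f^^((i + 1) mod p0)) x0" using permod[of "Suc i"] by simp
      finally have "b = cs ! ((i + 1) mod p0)" using csn p0(1) by simp
      moreover have "a = cs ! i" using i csn by simp
      ultimately show "e \<in> {(cs ! i, cs ! ((i + 1) mod length cs)) | i. i < length cs}"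
        using e i lcs by blast
    qed
  next
    show "{(cs ! i, cs ! ((i + 1) mod length cs)) | i. i < length cs} \<subseteq> induced E C"
    proof
      fix e assume "e \<in> {(cs ! i, cs ! ((i + 1) mod length cs)) | i. i < length cs}"
      then obtain i where i: "i < p0" "e = (cs ! i, cs ! ((i + 1) mod p0))" using lcs by auto
      have "cs ! ((i + 1) mod p0) = (f^^(Suc i)) x0" using csn p0(1) permod[of "Suc i"] by simp
      hence "e = ((f^^i) x0, f ((f^^i) x0))" using i csn by simp
      moreover have "(f^^i) x0 \<in> C" unfolding Ceq by auto
      moreover hence "f ((f^^i) x0) \<in> C" by (rule fC)
      ultimately show "e \<in> induced E C" using EV fpV x0V unfolding induced_def by auto
    qed
  qed
  have reachC: "\<exists>n. (f^^n) x \<in> C" if xV: "x \<in> V" for x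
  proof -
    obtain i j where "(f^^i) x = (f^^j) x0" using conn[of x x0] xV x0 unfolding V_def by auto
    thus ?thesis unfolding Ceq by (metis rangeI)
  qed
  define dist where "dist x = (LEAST n. (f^^n) x \<in> C)" for x
  have dist_ok: "(f^^(dist x)) x \<in> C" if "x \<in> V" for x
    unfolding dist_def using reachC[OF that] by (rule LeastI_ex)
  have dist_min: "dist x \<le> n" if "(f^^n) x \<in> C" for x n
    unfolding dist_def using that by (rule Least_le)
  have dist0: "dist x \<ge> 1" if "x \<in> V - C" for x
  proof (rule ccontr)
    assume "\<not> dist x \<ge> 1"
    hence "dist x = 0" by simp
    with dist_ok[of x] that show False by simp
  qed
  have dist_f: "dist (f x) = dist x - 1" if "x \<in> V - C" for x
  proof -
    have x: "x \<in> V" using that by simp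
    have dx: "dist x \<ge> 1" using dist0[OF that] .
    have "(f^^(Suc (dist x - 1))) x \<in> C" using dist_ok[OF x] dx by simp
    hence "(f^^(dist x - 1)) (f x) \<in> C" by (simp only: funpow_Suc_right o_apply)
    hence a: "dist (f x) \<le> dist x - 1" by (rule dist_min)
    have "(f^^(Suc (dist (f x)))) x \<in> C" using dist_ok[OF fV[OF x]] by (simp only: funpow_Suc_right o_apply)
    hence "dist x \<le> Suc (dist (f x))" by (rule dist_min)
    with a dx show ?thesis by auto
  qed
  define rtof where "rtof x = (f^^(dist x - 1)) x" for x
  have rtof_props: "rtof x \<in> V - C \<and> f (rtof x) \<in> C" if "x \<in> V - C" for x
  proof -
    have dx: "dist x \<ge> 1" using dist0[OF that] .
    have "rtof x \<in> V" unfolding rtof_def using fpV that by auto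
    moreover have "rtof x \<notin> C"
    proof
      assume "rtof x \<in> C"
      hence "dist x \<le> dist x - 1" unfolding rtof_def by (rule dist_min)
      with dx show False by simp
    qed
    moreover have "f (rtof x) = (f^^(dist x)) x"
    proof -
      have "f (rtof x) = (f^^(Suc (dist x - 1))) x" unfolding rtof_def by simp
      also have "Suc (dist x - 1) = dist x" using dx by simp
      finally show ?thesis .
    qed
    ultimately show ?thesis using dist_ok that by auto
  qed
  have rtof_r: "rtof r = r" if "r \<in> V - C" "f r \<in> C" for r
  proof -
    have "dist r \<le> 1" using that(2) by (intro dist_min) simp
    with dist0[OF that(1)] have "dist r = 1" by simp
    thus ?thesis unfolding rtof_def by simp
  qed
  have rtof_f: "rtof (f x) = rtof x" "f x \<in> V - C" if "x \<in> V - C" "rtof x \<noteq> x" for x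
  proof -
    have dx: "dist x \<ge> 2"
    proof (rule ccontr)
      assume "\<not> dist x \<ge> 2"
      with dist0[OF that(1)] have "dist x = 1" by simp
      with that(2) show False unfolding rtof_def by simp
    qed
    show "f x \<in> V - C"
    proof -
      have "f x \<notin> C"
      proof
        assume "f x \<in> C"
        hence "dist x \<le> 1" by (intro dist_min) simp
        with dx show False by simp
      qed
      thus ?thesis using fV that by auto
    qed
    have "rtof (f x) = (f^^(dist x - 2)) (f x)" unfolding rtof_def using dist_f[OF that(1)]
      by (simp add: numeral_2_eq_2)
    also have "\<dots> = (f^^(Suc (dist x - 2))) x" by (simp only: funpow_Suc_right o_apply)
    also have "\<dots> = rtof x" unfolding rtof_def using dx
      by (simp add: Suc_diff_Suc numeral_2_eq_2)
    finally show "rtof (f x) = rtof x" .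
  qed
  define Tof where "Tof r = {y \<in> V - C. rtof y = r}" for r
  define Ts where "Ts = {Tof r | r. r \<in> V - C \<and> f r \<in> C}"
  define rt where "rt T = rtof (SOME y. y \<in> T)" for T :: "'a set"
  define att where "att T = f (rt T)" for T
  have rTof: "r \<in> Tof r" if "r \<in> V - C" "f r \<in> C" for r
    unfolding Tof_def using that rtof_r by auto
  have rtTof: "rt (Tof r) = r" if "r \<in> V - C" "f r \<in> C" for r
  proof -
    have "(SOME y. y \<in> Tof r) \<in> Tof r" using rTof[OF that] by (rule someI)
    thus ?thesis unfolding rt_def Tof_def by simp
  qed
  have treeT: "rooted_tree (Tof r) (induced E (Tof r)) r" if r: "r \<in> V - C" "f r \<in> C" for r
  proof (rule tree_lemma[where f=f])
    show "\<And>x y. (x, y) \<in> E \<Longrightarrow> y = f x" by (rule Ef)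
    show "r \<in> Tof r" by (rule rTof[OF r])
    show "f r \<notin> Tof r" using r unfolding Tof_def by auto
    show "\<exists>n. (f ^^ n) x = r" if "x \<in> Tof r" for x using that unfolding Tof_def rtof_def by auto
    fix x assume x: "x \<in> Tof r" "x \<noteq> r"
    hence xx: "x \<in> V - C" "rtof x = r" unfolding Tof_def by auto
    with x have ne: "rtof x \<noteq> x" by simp
    show "(x, f x) \<in> E \<and> f x \<in> Tof r"
      using EV[of x] xx rtof_f[OF xx(1) ne] unfolding Tof_def by auto
  qed
  show ?thesis
    unfolding graph_type3_def V_def[symmetric]
  proof (rule exI[of _ cs], rule exI[of _ Ts], rule exI[of _ rt], rule exI[of _ att], intro conjI ballI impI)
    show "cs \<noteq> []" using lcs p0 by auto
    show "distinct cs" by (rule dcs)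
    show "set cs \<subseteq> V" using CV C_def by simp
    show "induced E (set cs) = {(cs ! i, cs ! ((i + 1) mod length cs)) |i. i < length cs}"
      using indC C_def by simp
    show "T \<noteq> {}" if "T \<in> Ts" for T using that rTof unfolding Ts_def by auto
    show "T1 \<inter> T2 = {}" if "T1 \<in> Ts" "T2 \<in> Ts" "T1 \<noteq> T2" for T1 T2
      using that unfolding Ts_def Tof_def by auto
    show "\<Union> Ts = V - set cs"
    proof
      show "\<Union> Ts \<subseteq> V - set cs" unfolding Ts_def Tof_def C_def by auto
      show "V - set cs \<subseteq> \<Union> Ts"
      proof
        fix y assume y: "y \<in> V - set cs"
        hence "y \<in> Tof (rtof y)" using C_def unfolding Tof_def by auto
        moreover have "Tof (rtof y) \<in> Ts" using rtof_props[of y] y C_def unfolding Ts_def by auto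
        ultimately show "y \<in> \<Union> Ts" by auto
      qed
    qed
    show "rooted_tree T (induced E T) (rt T)" if "T \<in> Ts" for T
      using that treeT rtTof unfolding Ts_def by auto
    show "att T \<in> set cs" if "T \<in> Ts" for T
      using that rtTof unfolding Ts_def att_def C_def by auto
    show "E = induced E (set cs) \<union> (\<Union>T\<in>Ts. induced E T \<union> {(rt T, att T)})"
    proof
      show "E \<subseteq> induced E (set cs) \<union> (\<Union>T\<in>Ts. induced E T \<union> {(rt T, att T)})"
      proof
        fix e assume e: "e \<in> E"
        then obtain x where x: "e = (x, f x)" "x \<in> V" using ED V_def by (cases e) auto
        show "e \<in> induced E (set cs) \<union> (\<Union>T\<in>Ts. induced E T \<union> {(rt T, att T)})"
        proof (cases "x \<in> C")
          case True
          then show ?thesis using x e fC unfolding induced_def C_def by auto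
        next
          case False
          hence xC: "x \<in> V - C" using x by simp
          define r where "r = rtof x"
          have r: "r \<in> V - C" "f r \<in> C" using rtof_props[OF xC] r_def by auto
          have TT: "Tof r \<in> Ts" using r unfolding Ts_def by auto
          have xT: "x \<in> Tof r" using xC r_def unfolding Tof_def by auto
          show ?thesis
          proof (cases "x = r")
            case True
            hence "e = (rt (Tof r), att (Tof r))" using x rtTof[OF r] att_def by simp
            then show ?thesis using TT by blast
          next
            case False
            hence "f x \<in> Tof r" using rtof_f[OF xC] r_def unfolding Tof_def by auto
            hence "e \<in> induced E (Tof r)" using xT e x unfolding induced_def by auto
            then show ?thesis using TT by blast
          qed
        qed
      qed
      show "induced E (set cs) \<union> (\<Union>T\<in>Ts. induced E T \<union> {(rt T, att T)}) \<subseteq> E"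
      proof -
        have "(rt T, att T) \<in> E" if TT: "T \<in> Ts" for T
        proof -
          obtain r where r: "r \<in> V - C" "f r \<in> C" "T = Tof r" using TT unfolding Ts_def by auto
          show ?thesis using r rtTof[OF r(1,2)] att_def EV by auto
        qed
        thus ?thesis unfolding induced_def by auto
      qed
    qed
  qed
qed

end



context gset begin

lemma case3:
  assumes noroot: "\<And>x. x \<in> M - {base} \<Longrightarrow> f x \<noteq> base"
    and aper: "\<And>x p. x \<in> M - {base} \<Longrightarrow> p > 0 \<Longrightarrow> (f^^p) x \<noteq> x"
    and ne: "M - {base} \<noteq> {}"
  shows "graph_type2 (M - {base}) E"
proof -
  define V where "V = M - {base}"
  have fV: "f x \<in> V" if "x \<in> V" for x using that noroot fM unfolding V_def by auto
  have fpV: "(f^^n) x \<in> V" if "x \<in> V" for x n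
    using that by (induction n) (auto intro: fV)
  have EV: "(x, f x) \<in> E" if "x \<in> V" for x using EI noroot that unfolding V_def by auto
  have injf: "i = j" if xV: "x \<in> V" and eq: "(f^^i) x = (f^^j) x" for x i j
  proof -
    have g: False if "i' < j'" "(f^^i') x = (f^^j') x" for i' j'
    proof -
      have "(f^^(j' - i')) ((f^^i') x) = (f^^(j' - i' + i')) x"
        by (simp only: funpow_add o_apply)
      also have "j' - i' + i' = j'" using that by simp
      finally have "(f^^(j' - i')) ((f^^i') x) = (f^^j') x" .
      with that have "(f^^(j' - i')) ((f^^i') x) = (f^^i') x" by simp
      with aper[of "(f^^i') x" "j' - i'"] fpV[OF xV, of i'] that show False unfolding V_def by auto
    qed
    show ?thesis using g[of i j] g[of j i] eq by (cases "i < j"; cases "j < i") auto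
  qed
  obtain g1 where g1: "g1 \<in> G"
  proof -
    obtain m where "m \<in> V" using ne V_def by auto
    then obtain g where "g \<in> G" using gen V_def by blast
    thus ?thesis using that by blast
  qed
  have GV': "G \<subseteq> V" using GV V_def by simp
  have g1V: "g1 \<in> V" using g1 GV' by auto
  have meetE: "\<exists>a b. (f^^a) g = (f^^b) g1" if "g \<in> G" for g
    using conn[of g g1] that g1 GV by blast
  define ag where "ag g = (LEAST a. \<exists>b. (f^^a) g = (f^^b) g1)" for g
  define bg where "bg g = (SOME b. (f^^(ag g)) g = (f^^b) g1)" for g
  have agbg: "(f^^(ag g)) g = (f^^(bg g)) g1" if "g \<in> G" for g
  proof -
    have "\<exists>b. (f^^(ag g)) g = (f^^b) g1" unfolding ag_def
      using meetE[OF that] by (rule LeastI_ex)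
    thus ?thesis unfolding bg_def by (rule someI_ex)
  qed
  have agmin: "ag g \<le> a" if "(f^^a) g = (f^^b) g1" for g a b
    unfolding ag_def using that by (intro Least_le) blast
  define A where "A = Max (ag ` G)"
  define B where "B = Max (bg ` G)"
  have agA: "ag g \<le> A" if "g \<in> G" for g unfolding A_def using that Gfin by auto
  have bgB: "bg g \<le> B" if "g \<in> G" for g unfolding B_def using that Gfin by auto
  have K: "(f^^j) g = (f^^(bg g + (j - ag g))) g1" if "g \<in> G" "ag g \<le> j" for g j
  proof -
    have "(f^^j) g = (f^^(j - ag g + ag g)) g" using that by simp
    also have "\<dots> = (f^^(j - ag g)) ((f^^(ag g)) g)" by (simp only: funpow_add o_apply)
    also have "\<dots> = (f^^(j - ag g)) ((f^^(bg g)) g1)" using agbg[OF that(1)] by simp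
    also have "\<dots> = (f^^(j - ag g + bg g)) g1" by (simp only: funpow_add o_apply)
    also have "j - ag g + bg g = bg g + (j - ag g)" by simp
    finally show ?thesis .
  qed
  define w where "w = (f^^B) g1"
  define v where "v n = (f^^(Suc (B + n))) g1" for n
  define T where "T = V - range v"
  have vV: "v n \<in> V" for n unfolding v_def by (rule fpV[OF g1V])
  have injv: "inj v"
  proof (rule injI)
    fix a b assume "v a = v b"
    hence "Suc (B + a) = Suc (B + b)" unfolding v_def using injf[OF g1V] by blast
    thus "a = b" by simp
  qed
  have wT: "w \<in> T"
  proof -
    have "w \<noteq> v n" for n
    proof
      assume "w = v n"
      hence "B = Suc (B + n)" unfolding w_def v_def using injf[OF g1V] by blast
      thus False by simp
    qed
    thus ?thesis unfolding T_def w_def using fpV g1V by auto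
  qed
  have inray: "x \<in> range v" if "x = (f^^n) g1" "n > B" for x n
  proof -
    have "x = v (n - Suc B)" unfolding v_def using that by (simp add: Suc_diff_Suc)
    thus ?thesis by simp
  qed
  have Trep: "\<exists>g\<in>G. \<exists>j. x = (f^^j) g" if "x \<in> T" for x
    using that gen unfolding T_def V_def by blast
  have finT: "finite T"
  proof -
    have "T \<subseteq> (\<lambda>(g,j). (f^^j) g) ` (G \<times> {..A+B})"
    proof
      fix x assume xT: "x \<in> T"
      then obtain g j where g: "g \<in> G" "x = (f^^j) g" using Trep by blast
      have "j \<le> A + B"
      proof (rule ccontr)
        assume "\<not> j \<le> A + B"
        hence j: "j > A + B" by simp
        have "ag g \<le> j" using agA[OF g(1)] j by simp
        hence "x = (f^^(bg g + (j - ag g))) g1" using K g by simp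
        moreover have "bg g + (j - ag g) > B" using agA[OF g(1)] j by simp
        ultimately have "x \<in> range v" by (rule inray)
        with xT show False unfolding T_def by simp
      qed
      thus "x \<in> (\<lambda>(g,j). (f^^j) g) ` (G \<times> {..A+B})" using g by force
    qed
    moreover have "finite ((\<lambda>(g,j). (f^^j) g) ` (G \<times> {..A+B}))" using Gfin by simp
    ultimately show ?thesis by (rule finite_subset)
  qed
  have stepT: "f x \<in> T" if xT: "x \<in> T" and xw: "x \<noteq> w" for x
  proof (rule ccontr)
    assume "f x \<notin> T"
    moreover have "f x \<in> V" using fV xT T_def by simp
    ultimately obtain n where n: "f x = v n" unfolding T_def by auto
    obtain g j where g: "g \<in> G" "x = (f^^j) g" using Trep[OF xT] by blast
    have eq: "(f^^(Suc j)) g = (f^^(Suc (B + n))) g1" using n g unfolding v_def by simp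
    hence "ag g \<le> Suc j" by (rule agmin)
    show False
    proof (cases "ag g \<le> j")
      case True
      hence xe: "x = (f^^(bg g + (j - ag g))) g1" using K g by simp
      hence fx1: "f x = (f^^(Suc (bg g + (j - ag g)))) g1" by simp
      have "(f^^(Suc (bg g + (j - ag g)))) g1 = (f^^(Suc (B + n))) g1" using fx1 n unfolding v_def by simp
      hence "Suc (bg g + (j - ag g)) = Suc (B + n)" by (rule injf[OF g1V])
      hence "x = (f^^(B + n)) g1" using xe by simp
      then show False
      proof (cases n)
        case 0 then show False using \<open>x = (f^^(B + n)) g1\<close> xw unfolding w_def by simp
      next
        case (Suc n')
        then have "x = v n'" using \<open>x = (f^^(B + n)) g1\<close> unfolding v_def by simp
        then show False using xT unfolding T_def by simp
      qed
    next
      case False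
      hence "ag g = Suc j" using \<open>ag g \<le> Suc j\<close> by simp
      hence "(f^^(bg g)) g1 = (f^^(Suc (B + n))) g1" using agbg[OF g(1)] eq by simp
      hence "bg g = Suc (B + n)" using injf[OF g1V] by blast
      with bgB[OF g(1)] show False by simp
    qed
  qed
  have fw: "f w = v 0" unfolding w_def v_def by simp
  have reachT: "\<exists>n. (f^^n) x = w" if xT: "x \<in> T" for x
  proof -
    obtain g j where g: "g \<in> G" "x = (f^^j) g" using Trep[OF xT] by blast
    have jle: "j \<le> ag g + (B - bg g)"
    proof (rule ccontr)
      assume "\<not> ?thesis"
      hence j: "j > ag g + (B - bg g)" by simp
      hence "x = (f^^(bg g + (j - ag g))) g1" using K g by simp
      moreover have "bg g + (j - ag g) > B" using j by simp
      ultimately have "x \<in> range v" by (rule inray)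
      with xT show False unfolding T_def by simp
    qed
    have "(f^^(ag g + (B - bg g) - j)) x = (f^^(ag g + (B - bg g) - j + j)) g"
      using g by (simp add: funpow_add)
    also have "ag g + (B - bg g) - j + j = (B - bg g) + ag g" using jle by simp
    also have "(f^^((B - bg g) + ag g)) g = (f^^(B - bg g)) ((f^^(bg g)) g1)"
      using agbg[OF g(1)] by (simp add: funpow_add)
    also have "\<dots> = (f^^(B - bg g + bg g)) g1" by (simp add: funpow_add)
    also have "B - bg g + bg g = B" using bgB[OF g(1)] by simp
    finally show ?thesis unfolding w_def by blast
  qed
  have tree: "rooted_tree T (induced E T) w"
  proof (rule tree_lemma[where f=f])
    show "\<And>x y. (x, y) \<in> E \<Longrightarrow> y = f x" by (rule Ef)
    show "w \<in> T" by (rule wT)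
    show "f w \<notin> T" using fw unfolding T_def by simp
    show "\<exists>n. (f ^^ n) x = w" if "x \<in> T" for x using reachT that .
    fix x assume x: "x \<in> T" "x \<noteq> w"
    show "(x, f x) \<in> E \<and> f x \<in> T" using EV[of x] x stepT T_def by auto
  qed
  show ?thesis
    unfolding graph_type2_def V_def[symmetric]
  proof (rule exI[of _ T], rule exI[of _ w], rule exI[of _ v], intro conjI)
    show "finite T" by (rule finT)
    show "rooted_tree T (induced E T) w" by (rule tree)
    show "inj v" by (rule injv)
    show "T \<inter> range v = {}" unfolding T_def by auto
    show "V = T \<union> range v" unfolding T_def using vV by auto
    show "E = induced E T \<union> {(w, v 0)} \<union> range (\<lambda>n. (v n, v (Suc n)))"
    proof
      show "E \<subseteq> induced E T \<union> {(w, v 0)} \<union> range (\<lambda>n. (v n, v (Suc n)))"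
      proof
        fix e assume e: "e \<in> E"
        then obtain x where x: "e = (x, f x)" "x \<in> V" using ED V_def by (cases e) auto
        show "e \<in> induced E T \<union> {(w, v 0)} \<union> range (\<lambda>n. (v n, v (Suc n)))"
        proof (cases "x \<in> T")
          case True
          show ?thesis
          proof (cases "x = w")
            case True then show ?thesis using x fw by simp
          next
            case False
            then have "f x \<in> T" using stepT \<open>x \<in> T\<close> by simp
            then show ?thesis using e x \<open>x \<in> T\<close> unfolding induced_def by auto
          qed
        next
          case False
          then obtain n where n: "x = v n" using x unfolding T_def by auto
          have "f x = v (Suc n)" unfolding n v_def by simp
          then show ?thesis using x n by auto
        qed
      qed
      show "induced E T \<union> {(w, v 0)} \<union> range (\<lambda>n. (v n, v (Suc n))) \<subseteq> E"
      proof -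
        have "(w, v 0) \<in> E" using EV[of w] wT fw T_def by auto
        moreover have "(v n, v (Suc n)) \<in> E" for n
          using EV[OF vV[of n]] unfolding v_def by simp
        ultimately show ?thesis unfolding induced_def by auto
      qed
    qed
  qed
qed

end



lemma meet_trans:
  fixes f :: "'a \<Rightarrow> 'a"
  assumes "(f^^i) x = (f^^j) y" "(f^^i) x \<noteq> base" "(f^^k) y = (f^^l) z" "(f^^k) y \<noteq> base"
  shows "\<exists>a b. (f^^a) x = (f^^b) z \<and> (f^^a) x \<noteq> base"
proof (cases "j \<le> k")
  case True
  have "(f^^(k - j + i)) x = (f^^(k-j)) ((f^^i) x)" by (simp only: funpow_add o_apply)
  also have "\<dots> = (f^^(k-j)) ((f^^j) y)" using assms by simp
  also have "\<dots> = (f^^(k-j+j)) y" by (simp only: funpow_add o_apply)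
  also have "k - j + j = k" using True by simp
  finally have "(f^^(k - j + i)) x = (f^^l) z" using assms by simp
  moreover have "(f^^(k - j + i)) x \<noteq> base" using calculation assms(3,4) by simp
  ultimately show ?thesis by blast
next
  case False
  have "(f^^(j - k + l)) z = (f^^(j-k)) ((f^^l) z)" by (simp only: funpow_add o_apply)
  also have "\<dots> = (f^^(j-k)) ((f^^k) y)" using assms by simp
  also have "\<dots> = (f^^(j-k+k)) y" by (simp only: funpow_add o_apply)
  also have "j - k + k = j" using False by simp
  finally have "(f^^i) x = (f^^(j - k + l)) z" using assms by simp
  thus ?thesis using assms(2) by blast
qed

theorem mainTheorem9:
  fixes M :: "'a set" and base :: 'a and act :: "tmon \<Rightarrow> 'a \<Rightarrow> 'a"
  assumes "tmodule M base act"
    and "nontrivial M base"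
    and "fin_gen M base act"
    and "indecomposable M base act"
  shows "graph_type1 (gverts M base) (gedges M base act) \<or>
         graph_type2 (gverts M base) (gedges M base act) \<or>
         graph_type3 (gverts M base) (gedges M base act)"
proof -
  define f where "f = act (Some 1)"
  from assms(1) have baseM: "base \<in> M" and actM: "\<And>a m. m \<in> M \<Longrightarrow> act a m \<in> M"
    and act0: "\<And>m. m \<in> M \<Longrightarrow> act (Some 0) m = m"
    and actc: "\<And>a b m. m \<in> M \<Longrightarrow> act a (act b m) = act (tmul a b) m"
    and actN: "\<And>m. m \<in> M \<Longrightarrow> act None m = base"
    unfolding tmodule_def by auto
  have fM: "f m \<in> M" if "m \<in> M" for m unfolding f_def using actM that .
  have actpow: "act (Some j) m = (f^^j) m" if "m \<in> M" for m j
  proof (induction j)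
    case 0 then show ?case using act0 that by simp
  next
    case (Suc j)
    have "act (Some (Suc j)) m = act (tmul (Some 1) (Some j)) m" by simp
    also have "\<dots> = f (act (Some j) m)" unfolding f_def using actc[OF that] by simp
    finally show ?case using Suc by simp
  qed
  have fb: "f base = base"
  proof -
    have "f base = act (Some 1) (act None base)" unfolding f_def using actN baseM by simp
    also have "\<dots> = act (tmul (Some 1) None) base" using actc baseM by blast
    also have "\<dots> = base" using actN baseM by simp
    finally show ?thesis .
  qed
  have fpb: "(f^^n) base = base" for n using fb by (rule funpow_base)
  have fpM: "(f^^n) m \<in> M" if "m \<in> M" for m n using that by (induction n) (auto intro: fM)
  define meet where "meet x y \<longleftrightarrow> (\<exists>i j. (f^^i) x = (f^^j) y \<and> (f^^i) x \<noteq> base)" for x y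
  have mtrans: "meet x z" if mm: "meet x y" "meet y z" for x y z
  proof -
    obtain i j where 1: "(f^^i) x = (f^^j) y" "(f^^i) x \<noteq> base" using mm(1) unfolding meet_def by blast
    obtain k l where 2: "(f^^k) y = (f^^l) z" "(f^^k) y \<noteq> base" using mm(2) unfolding meet_def by blast
    show ?thesis using meet_trans[OF 1 2] unfolding meet_def .
  qed
  have mpow1: "meet x ((f^^j) x)" if "(f^^j) x \<noteq> base" for x j
    unfolding meet_def using that by (intro exI[of _ j] exI[of _ 0]) simp
  have mpow2: "meet ((f^^j) x) x" if "(f^^j) x \<noteq> base" for x j
    unfolding meet_def using that by (intro exI[of _ 0] exI[of _ j]) simp
  have conn: "meet x y" if xy: "x \<in> M - {base}" "y \<in> M - {base}" for x y
  proof (rule ccontr)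
    assume nm: "\<not> meet x y"
    define S where "S = {z \<in> M - {base}. meet x z}"
    define N1 where "N1 = S \<union> {base}"
    define N2 where "N2 = M - S"
    have xS: "x \<in> S" unfolding S_def meet_def using xy by (intro CollectI conjI exI[of _ 0]) auto
    have yS: "y \<notin> S" unfolding S_def using nm by auto
    have sub1: "submodule N1 M base act"
      unfolding submodule_def
    proof (intro conjI allI ballI)
      show "N1 \<subseteq> M" unfolding N1_def S_def using baseM by auto
      show "base \<in> N1" unfolding N1_def by simp
      fix a m assume m: "m \<in> N1"
      hence mM: "m \<in> M" unfolding N1_def S_def using baseM by auto
      show "act a m \<in> N1"
      proof (cases a)
        case None then show ?thesis using actN mM unfolding N1_def by simp
      next
        case (Some j)
        hence e: "act a m = (f^^j) m" using actpow mM by simp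
        show ?thesis
        proof (cases "(f^^j) m = base")
          case True then show ?thesis using e unfolding N1_def by simp
        next
          case False
          hence "m \<noteq> base" using fpb by auto
          hence "meet x m" using m unfolding N1_def S_def by auto
          hence "meet x ((f^^j) m)" using mtrans mpow1[OF False] by blast
          then show ?thesis using e False fpM[OF mM] unfolding N1_def S_def by auto
        qed
      qed
    qed
    have sub2: "submodule N2 M base act"
      unfolding submodule_def
    proof (intro conjI allI ballI)
      show "N2 \<subseteq> M" unfolding N2_def by auto
      show "base \<in> N2" unfolding N2_def S_def using baseM by auto
      fix a m assume m: "m \<in> N2"
      hence mM: "m \<in> M" unfolding N2_def by auto
      show "act a m \<in> N2"
      proof (cases a)
        case None then show ?thesis using actN mM baseM unfolding N2_def S_def by simp
      next
        case (Some j)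
        hence e: "act a m = (f^^j) m" using actpow mM by simp
        show ?thesis
        proof (rule ccontr)
          assume "act a m \<notin> N2"
          hence inS: "(f^^j) m \<in> S" using e fpM[OF mM] unfolding N2_def by auto
          hence ne: "(f^^j) m \<noteq> base" and mx: "meet x ((f^^j) m)" unfolding S_def by auto
          have "m \<noteq> base" using ne fpb by auto
          moreover have "meet x m" using mtrans[OF mx mpow2[OF ne]] .
          ultimately have "m \<in> S" using mM unfolding S_def by auto
          with m show False unfolding N2_def by simp
        qed
      qed
    qed
    have "decomposable M base act"
      unfolding decomposable_def
    proof (intro exI conjI)
      show "submodule N1 M base act" by (rule sub1)
      show "submodule N2 M base act" by (rule sub2)
      show "N1 \<union> N2 = M" unfolding N1_def N2_def S_def using baseM by auto
      show "N1 \<inter> N2 = {base}" unfolding N1_def N2_def S_def using baseM by auto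
      show "nontrivial N1 base" unfolding nontrivial_def N1_def using xS xy by auto
      show "nontrivial N2 base" unfolding nontrivial_def N2_def using yS xy by auto
    qed
    with assms(4) show False unfolding indecomposable_def by simp
  qed
  obtain gs where gs: "set gs \<subseteq> M" "\<And>m. m \<in> M \<Longrightarrow> m = base \<or> (\<exists>g\<in>set gs. \<exists>j. m = act (Some j) g)"
    using assms(3) unfolding fin_gen_def by blast
  define G where "G = set gs - {base}"
  have gen: "\<exists>g\<in>G. \<exists>j. m = (f^^j) g" if m: "m \<in> M - {base}" for m
  proof -
    obtain g j where g: "g \<in> set gs" "m = act (Some j) g" using gs(2)[of m] m by auto
    hence mg: "m = (f^^j) g" using actpow gs(1) by auto
    hence "g \<noteq> base" using m fpb by auto
    hence "g \<in> G" using g unfolding G_def by simp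
    thus ?thesis using mg by blast
  qed
  interpret gset M base f G
  proof
    show "base \<in> M" by (rule baseM)
    show "\<And>m. m \<in> M \<Longrightarrow> f m \<in> M" by (rule fM)
    show "f base = base" by (rule fb)
    show "\<And>x y. x \<in> M - {base} \<Longrightarrow> y \<in> M - {base} \<Longrightarrow>
        \<exists>i j. (f^^i) x = (f^^j) y \<and> (f^^i) x \<noteq> base" using conn unfolding meet_def by blast
    show "finite G" unfolding G_def by simp
    show "G \<subseteq> M - {base}" unfolding G_def using gs(1) by auto
    show "\<And>m. m \<in> M - {base} \<Longrightarrow> \<exists>g\<in>G. \<exists>j. m = (f^^j) g" by (rule gen)
  qed
  have VE: "gverts M base = M - {base}" "gedges M base act = E"
  proof -
    show "gverts M base = M - {base}" unfolding gverts_def ..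
    have "E = {(m, f m) | m. m \<in> M - {base} \<and> f m \<noteq> base}" by (rule E_def)
    thus "gedges M base act = E" unfolding gedges_def f_def by simp
  qed
  have ne: "M - {base} \<noteq> {}" using assms(2) baseM unfolding nontrivial_def by auto
  have "graph_type1 (M - {base}) E \<or> graph_type2 (M - {base}) E \<or> graph_type3 (M - {base}) E"
  proof (cases "\<exists>r\<in>M - {base}. f r = base")
    case True
    then obtain r where "r \<in> M - {base}" "f r = base" by blast
    then show ?thesis using case1 by blast
  next
    case False
    hence nr: "\<And>x. x \<in> M - {base} \<Longrightarrow> f x \<noteq> base" by blast
    show ?thesis
    proof (cases "\<exists>x0\<in>M - {base}. \<exists>p>0. (f^^p) x0 = x0")
      case True
      then obtain x0 p where "x0 \<in> M - {base}" "p > 0" "(f^^p) x0 = x0" by blast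
      then show ?thesis using case2[OF nr] by blast
    next
      case False
      hence "\<And>x p. x \<in> M - {base} \<Longrightarrow> p > 0 \<Longrightarrow> (f^^p) x \<noteq> x" by blast
      then show ?thesis using case3[OF nr _ ne] by blast
    qed
  qed
  thus ?thesis unfolding VE .
qed


end
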